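(* Let $X_1,\ldots,X_n$ be independent and uniformly distributed on $\{1,\ldots,n\}$ under $\mathbb{P}$, let $Y_q:=\#\{1\le i\le n:q\mid X_i\}$ for primes $q$, and $S(k,n):=\{q\in\mathcal{P}:k<q\le n\}$. Then for every $\epsilon>0$, \[ \limsup_{k\to\infty}\limsup_{n\to\infty}\frac{1}{n}\log\mathbb{P}\left(\sum_{q\in S(k,n)}Y_{q}^{2}>n^{2}\epsilon\right)=-\infty. \]
   Context: $\mathcal{P}$ denotes the set of primes. *)

theory Defs
  imports "HOL-Probability.Probability"
begin

definition eln :: "real \<Rightarrow> ereal" where
  "eln p = (if p \<le> 0 then - \<infinity> else ereal (ln p))"

text \<open>Joint law of X_1,...,X_n: independent, uniform on {1..n}
  (uniform distribution on the product space {1..n}^{1..n}).\<close>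
definition sample_space :: "nat \<Rightarrow> (nat \<Rightarrow> nat) pmf" where
  "sample_space n = pmf_of_set (PiE {1..n} (\<lambda>_. {1..n}))"

definition Ycount :: "nat \<Rightarrow> nat \<Rightarrow> (nat \<Rightarrow> nat) \<Rightarrow> nat" where
  "Ycount n q X = card {i \<in> {1..n}. q dvd X i}"

definition Sprimes :: "nat \<Rightarrow> nat \<Rightarrow> nat set" where
  "Sprimes k n = {q. prime q \<and> k < q \<and> q \<le> n}"

end

theory Submission imports Defs begin

lemma prod_primes_dvd:
  fixes x :: nat
  assumes "finite Q" "\<forall>q\<in>Q. prime q" "\<forall>q\<in>Q. q dvd x"
  shows "(\<Prod>q\<in>Q. q) dvd x"
  using assms
proof (induction Q rule: finite_induct)
  case empty then show ?case by simp
next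
  case (insert q F)
  have "\<not> q dvd (\<Prod>p\<in>F. p)"
  proof
    assume "q dvd (\<Prod>p\<in>F. p)"
    then obtain p where "p \<in> F" "q dvd p"
      using prime_dvd_prod_iff[of F q "\<lambda>p. p"] insert by auto
    then have "q = p" using insert by (simp add: primes_dvd_imp_eq)
    then show False using insert \<open>p \<in> F\<close> by auto
  qed
  then have "coprime q (\<Prod>p\<in>F. p)" using insert by (simp add: prime_imp_coprime)
  then show ?case using insert by (simp add: divides_mult)
qed

lemma card_mult_le:
  assumes "L \<ge> (1::nat)"
  shows "real (card {x\<in>{1..n}. L dvd x}) \<le> real n / real L"
proof -
  have "{x\<in>{1..n}. L dvd x} \<subseteq> (\<lambda>j. L * j) ` {1..n div L}"
  proof
    fix x assume "x \<in> {x\<in>{1..n}. L dvd x}"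
    then obtain j where j: "x = L * j" "1 \<le> x" "x \<le> n" by auto
    then have "j \<ge> 1" by (cases j) auto
    moreover have "j \<le> n div L" using j assms
      by (metis div_le_mono nonzero_mult_div_cancel_left not_one_le_zero)
    ultimately show "x \<in> (\<lambda>j. L * j) ` {1..n div L}" using j by auto
  qed
  then have "card {x\<in>{1..n}. L dvd x} \<le> card ((\<lambda>j. L * j) ` {1..n div L})"
    by (intro card_mono) auto
  also have "\<dots> \<le> n div L" using card_image_le[of "{1..n div L}" "\<lambda>j. L * j"] by simp
  finally have "real (card {x\<in>{1..n}. L dvd x}) \<le> real (n div L)" by simp
  moreover have "real (n div L) \<le> real n / real L" by (rule of_nat_div_le_of_nat)
  ultimately show ?thesis by linarith
qed


lemma count_G:
  fixes S :: "nat set" and n :: nat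
  assumes S: "finite S" "\<forall>q\<in>S. prime q" and C: "\<forall>q\<in>S. C q \<subseteq> {1..n}"
  shows "real (card {X\<in>PiE {1..n} (\<lambda>_. {1..n}). \<forall>q\<in>S. \<forall>i\<in>C q. q dvd X i})
     \<le> real n ^ n / (\<Prod>q\<in>S. real q ^ card (C q))"
proof -
  define I where "I = {1..n}"
  define L where "L i = (\<Prod>q\<in>{q\<in>S. i \<in> C q}. q)" for i
  have Lpos: "L i \<ge> 1" for i
    unfolding L_def using S prime_gt_0_nat
    by (metis (no_types, lifting) One_nat_def Suc_leI mem_Collect_eq prime_gt_0_nat prod_pos)
  have eq: "{X\<in>PiE I (\<lambda>_. I). \<forall>q\<in>S. \<forall>i\<in>C q. q dvd X i}
        = PiE I (\<lambda>i. {x\<in>I. \<forall>q\<in>S. i \<in> C q \<longrightarrow> q dvd x})"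
  proof (rule set_eqI)
    fix X
    show "X \<in> {X\<in>PiE I (\<lambda>_. I). \<forall>q\<in>S. \<forall>i\<in>C q. q dvd X i} \<longleftrightarrow>
          X \<in> PiE I (\<lambda>i. {x\<in>I. \<forall>q\<in>S. i \<in> C q \<longrightarrow> q dvd x})"
      using C unfolding I_def PiE_iff by blast
  qed
  have sub: "{x\<in>I. \<forall>q\<in>S. i \<in> C q \<longrightarrow> q dvd x} \<subseteq> {x\<in>I. L i dvd x}" for i
  proof
    fix x assume "x \<in> {x\<in>I. \<forall>q\<in>S. i \<in> C q \<longrightarrow> q dvd x}"
    then show "x \<in> {x\<in>I. L i dvd x}" unfolding L_def
      using prod_primes_dvd[of "{q\<in>S. i \<in> C q}" x] S by auto
  qed
  have "real (card (PiE I (\<lambda>i. {x\<in>I. \<forall>q\<in>S. i \<in> C q \<longrightarrow> q dvd x})))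
      = (\<Prod>i\<in>I. real (card {x\<in>I. \<forall>q\<in>S. i \<in> C q \<longrightarrow> q dvd x}))"
    unfolding I_def by (simp add: card_PiE)
  also have "\<dots> \<le> (\<Prod>i\<in>I. real n / real (L i))"
  proof (rule prod_mono, intro ballI conjI)
    fix i assume "i \<in> I"
    show "0 \<le> real (card {x\<in>I. \<forall>q\<in>S. i \<in> C q \<longrightarrow> q dvd x})" by simp
    have "card {x\<in>I. \<forall>q\<in>S. i \<in> C q \<longrightarrow> q dvd x} \<le> card {x\<in>I. L i dvd x}"
      by (rule card_mono) (use sub in \<open>auto simp: I_def\<close>)
    then show "real (card {x\<in>I. \<forall>q\<in>S. i \<in> C q \<longrightarrow> q dvd x}) \<le> real n / real (L i)"
      using card_mult_le[OF Lpos[of i], of n] unfolding I_def by linarith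
  qed
  also have "\<dots> = real n ^ n / (\<Prod>i\<in>I. real (L i))"
    unfolding I_def by (simp add: prod_dividef)
  also have "(\<Prod>i\<in>I. real (L i)) = (\<Prod>q\<in>S. real q ^ card (C q))"
  proof -
    have "(\<Prod>i\<in>I. real (L i)) = (\<Prod>i\<in>I. \<Prod>q\<in>{q\<in>S. i \<in> C q}. real q)"
      unfolding L_def by simp
    also have "\<dots> = (\<Prod>q\<in>S. \<Prod>i\<in>{i\<in>I. i \<in> C q}. real q)"
      using prod.swap_restrict[of I S "\<lambda>i q. real q" "\<lambda>i q. i \<in> C q"] S
      unfolding I_def by simp
    also have "\<dots> = (\<Prod>q\<in>S. real q ^ card (C q))"
    proof (rule prod.cong[OF refl])
      fix q assume "q \<in> S"
      then have "C q \<subseteq> I" using C unfolding I_def by auto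
      then have "{i\<in>I. i \<in> C q} = C q" by auto
      then show "(\<Prod>i\<in>{i\<in>I. i \<in> C q}. real q) = real q ^ card (C q)" by simp
    qed
    finally show ?thesis .
  qed
  finally show ?thesis using eq unfolding I_def by simp
qed


lemma sum_inv_sq_aux:
  assumes "k \<ge> (1::nat)" "n \<ge> k"
  shows "(\<Sum>q\<in>{k<..n}. 1 / real q ^ 2) \<le> 1 / real k - 1 / real n"
  using assms(2)
proof (induction n rule: dec_induct)
  case base then show ?case by simp
next
  case (step m)
  have m1: "real m \<ge> 1" using step assms by simp
  have "{k<..Suc m} = insert (Suc m) {k<..m}" using step by auto
  then have "(\<Sum>q\<in>{k<..Suc m}. 1 / real q ^ 2) = 1 / real (Suc m) ^ 2 + (\<Sum>q\<in>{k<..m}. 1 / real q ^ 2)"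
    by simp
  also have "\<dots> \<le> 1 / real (Suc m) ^ 2 + (1 / real k - 1 / real m)" using step by simp
  also have "\<dots> \<le> 1 / real k - 1 / real (Suc m)"
  proof -
    have e: "1 / real m - 1 / real (Suc m) = 1 / (real m * real (Suc m))"
      using m1 by (simp add: field_simps)
    have "1 / real (Suc m) ^ 2 \<le> 1 / (real m * real (Suc m))"
      by (rule frac_le) (use m1 in \<open>auto simp: power2_eq_square\<close>)
    then have "1 / real (Suc m) ^ 2 \<le> 1 / real m - 1 / real (Suc m)" using e by simp
    then show ?thesis by simp
  qed
  finally show ?case .
qed

lemma sum_inv_sq:
  assumes "k \<ge> (1::nat)"
  shows "(\<Sum>q\<in>Sprimes k n. 1 / real q ^ 2) \<le> 1 / real k"
proof -
  have "(\<Sum>q\<in>Sprimes k n. 1 / real q ^ 2) \<le> (\<Sum>q\<in>{k<..n}. 1 / real q ^ 2)"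
    by (rule sum_mono2) (auto simp: Sprimes_def)
  also have "\<dots> \<le> 1 / real k"
  proof (cases "n \<ge> k")
    case True
    have "0 \<le> 1 / real n" by simp
    then show ?thesis using sum_inv_sq_aux[OF assms True] by linarith
  next
    case False then show ?thesis by simp
  qed
  finally show ?thesis .
qed

lemma inner_sum_le:
  fixes \<theta> :: real and q n :: nat
  assumes "q \<ge> 1" "q \<le> n"
  defines "m \<equiv> exp (1 + \<theta>) * real n / real q"
  shows "(\<Sum>T\<in>{T\<in>Pow {1..n}. T = {} \<or> real (card T) > m}. (exp \<theta> / real q) ^ card T) \<le> 2"
proof -
  define I where "I = {1..(n::nat)}"
  define g where "g T = (if T = {} then 1 else 0) + (exp (1 + \<theta>) / real q) ^ card T * exp (- m)" for T :: "nat set"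
  have g_eq: "(exp \<theta> / real q) ^ card T * exp (real (card T) - m) = (exp (1 + \<theta>) / real q) ^ card T * exp (- m)" for T :: "nat set"
  proof -
    have "exp (real (card T) - m) = exp 1 ^ card T * exp (-m)"
      by (simp add: exp_diff exp_of_nat_mult[symmetric] divide_inverse exp_minus)
    then show ?thesis by (simp add: exp_add power_mult_distrib power_divide field_simps)
  qed
  have "(\<Sum>T\<in>{T\<in>Pow I. T = {} \<or> real (card T) > m}. (exp \<theta> / real q) ^ card T)
      \<le> (\<Sum>T\<in>{T\<in>Pow I. T = {} \<or> real (card T) > m}. g T)"
  proof (rule sum_mono)
    fix T assume T: "T \<in> {T\<in>Pow I. T = {} \<or> real (card T) > m}"
    show "(exp \<theta> / real q) ^ card T \<le> g T"
    proof (cases "T = {}")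
      case True then show ?thesis by (simp add: g_def)
    next
      case False
      then have "real (card T) > m" using T by auto
      then have "exp (real (card T) - m) \<ge> 1" by simp
      then have "(exp \<theta> / real q) ^ card T \<le> (exp \<theta> / real q) ^ card T * exp (real (card T) - m)"
        using mult_left_mono[of 1 "exp (real (card T) - m)" "(exp \<theta> / real q) ^ card T"] by simp
      then show ?thesis using False g_eq[of T] by (simp add: g_def)
    qed
  qed
  also have "\<dots> \<le> (\<Sum>T\<in>Pow I. g T)"
    by (rule sum_mono2) (auto simp: I_def g_def)
  also have "(\<Sum>T\<in>Pow I. g T) = 1 + exp (- m) * (\<Sum>T\<in>Pow I. (exp (1 + \<theta>) / real q) ^ card T)"
  proof -
    have "(\<Sum>T\<in>Pow I. g T) = (\<Sum>T\<in>Pow I. (if T = {} then 1 else 0)) + (\<Sum>T\<in>Pow I. (exp (1 + \<theta>) / real q) ^ card T * exp (- m))"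
      unfolding g_def by (simp add: sum.distrib)
    also have "(\<Sum>T\<in>Pow I. (if T = {} then 1 else 0 :: real)) = 1"
      by (simp add: sum.delta' I_def)
    finally show ?thesis by (simp add: sum_distrib_left mult.commute)
  qed
  also have "(\<Sum>T\<in>Pow I. (exp (1 + \<theta>) / real q) ^ card T) = (1 + exp (1 + \<theta>) / real q) ^ n"
  proof -
    have "(\<Prod>x\<in>I. exp (1 + \<theta>) / real q + 1) = (\<Sum>X\<in>Pow I. (\<Prod>x\<in>X. exp (1 + \<theta>) / real q) * (\<Prod>x\<in>I-X. 1))"
      by (rule prod_add) (simp add: I_def)
    then show ?thesis by (simp add: I_def add.commute)
  qed
  also have "(1 + exp (1 + \<theta>) / real q) ^ n \<le> exp (exp (1 + \<theta>) / real q) ^ n"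
    by (rule power_mono) (auto simp: exp_ge_add_one_self add.commute)
  also have "exp (exp (1 + \<theta>) / real q) ^ n = exp m"
    by (simp add: m_def exp_of_nat_mult[symmetric] mult.commute)
  finally show ?thesis unfolding I_def by (simp add: exp_minus field_simps)
qed


lemma four_rearr: "(a::real) / b * (E * F) = a * F * (E / b)" by simp

lemma Sprimes_facts:
  shows "finite (Sprimes k n)" "\<forall>q\<in>Sprimes k n. prime q" "Sprimes k n \<subseteq> {1..n}"
  unfolding Sprimes_def
  by (auto intro: finite_subset[of _ "{..n}"] simp: prime_ge_1_nat)

lemma main_bound:
  fixes \<epsilon> \<theta> :: real and n k :: nat
  assumes n: "n \<ge> 1" and k: "k \<ge> 1" and eps: "\<epsilon> > 0" and th: "\<theta> \<ge> 0"
    and kbig: "real k \<ge> 2 * exp (2 + 2 * \<theta>) / \<epsilon>"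
  shows "real (card {X\<in>PiE {1..n} (\<lambda>_. {1..n}). (\<Sum>q\<in>Sprimes k n. real (Ycount n q X) ^ 2) > real n ^ 2 * \<epsilon>})
     \<le> real n ^ n * (exp (- \<theta> * (\<epsilon> / 2) * real n) * 2 ^ n)"
proof -
  define I where "I = {1..n}"
  define \<Omega> where "\<Omega> = PiE I (\<lambda>_. I)"
  define S where "S = Sprimes k n"
  define m where "m q = exp (1 + \<theta>) * real n / real q" for q :: nat
  define V where "V q = {T\<in>Pow I. T = {} \<or> real (card T) > m q}" for q
  define CC where "CC = {C \<in> PiE S V. (\<Sum>q\<in>S. real (card (C q))) > \<epsilon> / 2 * real n}"
  define cX where "cX X = restrict (\<lambda>q. if real (Ycount n q X) > m q then {i\<in>I. q dvd X i} else {}) S" for X :: "nat \<Rightarrow> nat"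
  define G where "G C = {X\<in>\<Omega>. \<forall>q\<in>S. \<forall>i\<in>C q. q dvd X i}" for C :: "nat \<Rightarrow> nat set"
  define Bad where "Bad = {X\<in>\<Omega>. (\<Sum>q\<in>S. real (Ycount n q X) ^ 2) > real n ^ 2 * \<epsilon>}"
  have Sfin: "finite S" and Sprime: "\<forall>q\<in>S. prime q" and SI: "S \<subseteq> I"
    using Sprimes_facts[of k n] unfolding S_def I_def by auto
  have qpos: "q \<ge> 1" "q \<le> n" if "q \<in> S" for q using SI that unfolding I_def by auto
  have Vfin: "finite (V q)" for q unfolding V_def I_def by auto
  have CCfin: "finite (PiE S V)" using Sfin Vfin by (intro finite_PiE) auto
  have msum: "(\<Sum>q\<in>S. m q ^ 2) \<le> \<epsilon> / 2 * real n ^ 2"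
  proof -
    have "(\<Sum>q\<in>S. m q ^ 2) = exp (2 + 2 * \<theta>) * real n ^ 2 * (\<Sum>q\<in>S. 1 / real q ^ 2)"
    proof -
      have "m q ^ 2 = exp (2 + 2 * \<theta>) * real n ^ 2 * (1 / real q ^ 2)" for q
      proof -
        have "exp (1 + \<theta>) ^ 2 = exp (2 + 2 * \<theta>)"
          by (simp add: power2_eq_square exp_add[symmetric])
        then show ?thesis by (simp add: m_def power_divide power_mult_distrib)
      qed
      then show ?thesis by (simp add: sum_distrib_left)
    qed
    also have "\<dots> \<le> exp (2 + 2 * \<theta>) * real n ^ 2 * (1 / real k)"
      using sum_inv_sq[OF k, of n] unfolding S_def by (intro mult_left_mono) auto
    also have "\<dots> = real n ^ 2 * (exp (2 + 2 * \<theta>) / real k)" by simp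
    also have "exp (2 + 2 * \<theta>) / real k \<le> \<epsilon> / 2"
      using kbig k eps by (simp add: field_simps)
    then have "real n ^ 2 * (exp (2 + 2 * \<theta>) / real k) \<le> real n ^ 2 * (\<epsilon> / 2)"
      by (intro mult_left_mono) auto
    finally show ?thesis by (simp add: mult.commute)
  qed
  have cover: "Bad \<subseteq> (\<Union>C\<in>CC. G C)"
  proof
    fix X assume XB: "X \<in> Bad"
    then have X\<Omega>: "X \<in> \<Omega>" and W: "(\<Sum>q\<in>S. real (Ycount n q X) ^ 2) > real n ^ 2 * \<epsilon>"
      unfolding Bad_def by auto
    have Yle: "Ycount n q X \<le> n" for q
    proof -
      have "card {i \<in> {1..n}. q dvd X i} \<le> card {1..n}" by (rule card_mono) auto
      then show ?thesis unfolding Ycount_def by simp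
    qed
    have key: "real (Ycount n q X) ^ 2 \<le> m q ^ 2 + real n * real (card (cX X q))" if "q \<in> S" for q
    proof (cases "real (Ycount n q X) > m q")
      case True
      then have "card (cX X q) = Ycount n q X" using that unfolding cX_def Ycount_def I_def by simp
      moreover have "real (Ycount n q X) ^ 2 \<le> real n * real (Ycount n q X)"
        using Yle[of q] by (simp add: power2_eq_square mult_right_mono)
      moreover have "0 \<le> m q ^ 2" by simp
      ultimately show ?thesis by (simp only:)
    next
      case False
      have "m q \<ge> 0" unfolding m_def by simp
      then have "real (Ycount n q X) ^ 2 \<le> m q ^ 2" using False
        by (intro power_mono) auto
      moreover have "0 \<le> real n * real (card (cX X q))" by simp
      ultimately show ?thesis by linarith
    qed
    have "real n ^ 2 * \<epsilon> < (\<Sum>q\<in>S. m q ^ 2 + real n * real (card (cX X q)))"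
    proof -
      have "(\<Sum>q\<in>S. real (Ycount n q X) ^ 2) \<le> (\<Sum>q\<in>S. m q ^ 2 + real n * real (card (cX X q)))"
        by (rule sum_mono) (rule key)
      then show ?thesis using W by linarith
    qed
    also have "\<dots> = (\<Sum>q\<in>S. m q ^ 2) + real n * (\<Sum>q\<in>S. real (card (cX X q)))"
      by (simp add: sum.distrib sum_distrib_left)
    finally have "real n ^ 2 * \<epsilon> < \<epsilon> / 2 * real n ^ 2 + real n * (\<Sum>q\<in>S. real (card (cX X q)))"
      using msum by linarith
    then have "real n * (\<epsilon> / 2 * real n) < real n * (\<Sum>q\<in>S. real (card (cX X q)))"
      by (simp add: power2_eq_square algebra_simps)
    then have sumgt: "\<epsilon> / 2 * real n < (\<Sum>q\<in>S. real (card (cX X q)))"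
      using n by (simp add: mult_less_cancel_left)
    have "cX X \<in> PiE S V"
    proof -
      have "cX X q \<in> V q" if "q \<in> S" for q
      proof (cases "real (Ycount n q X) > m q")
        case True
        then have "card (cX X q) = Ycount n q X" using that unfolding cX_def Ycount_def I_def by simp
        then show ?thesis using True that unfolding V_def cX_def by auto
      next
        case False then show ?thesis using that unfolding V_def cX_def by auto
      qed
      then show ?thesis unfolding cX_def by (auto simp: PiE_iff)
    qed
    then have "cX X \<in> CC" using sumgt unfolding CC_def by auto
    moreover have "X \<in> G (cX X)" using X\<Omega> unfolding G_def cX_def by auto
    ultimately show "X \<in> (\<Union>C\<in>CC. G C)" by blast
  qed
  have CCsub: "CC \<subseteq> PiE S V" unfolding CC_def by auto
  have "real (card Bad) \<le> real (card (\<Union>C\<in>CC. G C))"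
  proof -
    have "finite \<Omega>" unfolding \<Omega>_def I_def by (intro finite_PiE) auto
    moreover have "(\<Union>C\<in>CC. G C) \<subseteq> \<Omega>" unfolding G_def by auto
    ultimately have "finite (\<Union>C\<in>CC. G C)" by (rule finite_subset[rotated])
    then show ?thesis using cover by (intro of_nat_mono card_mono)
  qed
  also have "\<dots> \<le> real (\<Sum>C\<in>CC. card (G C))"
    by (intro of_nat_mono card_UN_le) (use CCfin CCsub finite_subset in blast)
  also have "\<dots> = (\<Sum>C\<in>CC. real (card (G C)))" by simp
  also have "\<dots> \<le> (\<Sum>C\<in>CC. real n ^ n / (\<Prod>q\<in>S. real q ^ card (C q)))"
  proof (rule sum_mono)
    fix C assume "C \<in> CC"
    then have "\<forall>q\<in>S. C q \<subseteq> {1..n}" unfolding CC_def V_def I_def by (auto simp: PiE_iff)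
    then show "real (card (G C)) \<le> real n ^ n / (\<Prod>q\<in>S. real q ^ card (C q))"
      using count_G[OF Sfin Sprime] unfolding G_def \<Omega>_def I_def by blast
  qed
  also have "\<dots> \<le> (\<Sum>C\<in>CC. real n ^ n * exp (- \<theta> * (\<epsilon> / 2) * real n) * (\<Prod>q\<in>S. (exp \<theta> / real q) ^ card (C q)))"
  proof (rule sum_mono)
    fix C assume C: "C \<in> CC"
    have P: "(\<Prod>q\<in>S. (exp \<theta> / real q) ^ card (C q)) = exp (\<theta> * (\<Sum>q\<in>S. real (card (C q)))) / (\<Prod>q\<in>S. real q ^ card (C q))"
    proof -
      have "(\<Prod>q\<in>S. (exp \<theta> / real q) ^ card (C q)) = (\<Prod>q\<in>S. exp \<theta> ^ card (C q)) / (\<Prod>q\<in>S. real q ^ card (C q))"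
        by (simp add: power_divide prod_dividef)
      also have "(\<Prod>q\<in>S. exp \<theta> ^ card (C q)) = exp (\<theta> * (\<Sum>q\<in>S. real (card (C q))))"
        by (simp add: exp_sum[OF Sfin] sum_distrib_left exp_of_nat_mult[symmetric] mult.commute)
      finally show ?thesis .
    qed
    have "1 \<le> exp (\<theta> * (\<Sum>q\<in>S. real (card (C q))) - \<theta> * (\<epsilon> / 2) * real n)"
    proof -
      have "\<theta> * (\<epsilon> / 2 * real n) \<le> \<theta> * (\<Sum>q\<in>S. real (card (C q)))"
        using C th unfolding CC_def by (intro mult_left_mono) auto
      then show ?thesis by simp
    qed
    moreover have "0 \<le> real n ^ n / (\<Prod>q\<in>S. real q ^ card (C q))" by (simp add: prod_nonneg)
    ultimately have "real n ^ n / (\<Prod>q\<in>S. real q ^ card (C q)) * 1 \<le> real n ^ n / (\<Prod>q\<in>S. real q ^ card (C q)) * exp (\<theta> * (\<Sum>q\<in>S. real (card (C q))) - \<theta> * (\<epsilon> / 2) * real n)"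
      by (rule mult_left_mono)
    then have "real n ^ n / (\<Prod>q\<in>S. real q ^ card (C q)) \<le> real n ^ n / (\<Prod>q\<in>S. real q ^ card (C q)) * exp (\<theta> * (\<Sum>q\<in>S. real (card (C q))) - \<theta> * (\<epsilon> / 2) * real n)"
      by simp
    also have "\<dots> = real n ^ n * exp (- \<theta> * (\<epsilon> / 2) * real n) * (\<Prod>q\<in>S. (exp \<theta> / real q) ^ card (C q))"
    proof -
      have "exp (\<theta> * (\<Sum>q\<in>S. real (card (C q))) - \<theta> * (\<epsilon> / 2) * real n)
          = exp (\<theta> * (\<Sum>q\<in>S. real (card (C q)))) * exp (- \<theta> * (\<epsilon> / 2) * real n)"
        by (simp add: exp_add[symmetric])
      moreover have "\<And>a b E F :: real. a / b * (E * F) = a * F * (E / b)" by simp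
      ultimately show ?thesis unfolding P by metis
    qed
    finally show "real n ^ n / (\<Prod>q\<in>S. real q ^ card (C q)) \<le> \<dots>" .
  qed
  also have "\<dots> \<le> (\<Sum>C\<in>PiE S V. real n ^ n * exp (- \<theta> * (\<epsilon> / 2) * real n) * (\<Prod>q\<in>S. (exp \<theta> / real q) ^ card (C q)))"
    by (rule sum_mono2[OF CCfin CCsub]) (intro mult_nonneg_nonneg prod_nonneg; simp)
  also have "\<dots> = real n ^ n * exp (- \<theta> * (\<epsilon> / 2) * real n) * (\<Prod>q\<in>S. \<Sum>T\<in>V q. (exp \<theta> / real q) ^ card T)"
    by (simp add: sum_distrib_left[symmetric] prod_sum_PiE[OF Sfin Vfin])
  finally have B1: "real (card Bad) \<le> real n ^ n * exp (- \<theta> * (\<epsilon> / 2) * real n) * (\<Prod>q\<in>S. \<Sum>T\<in>V q. (exp \<theta> / real q) ^ card T)" .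
  have B2: "(\<Prod>q\<in>S. \<Sum>T\<in>V q. (exp \<theta> / real q) ^ card T) \<le> (\<Prod>q\<in>S. 2)"
  proof (rule prod_mono, intro ballI conjI)
    fix q assume "q \<in> S"
    show "0 \<le> (\<Sum>T\<in>V q. (exp \<theta> / real q) ^ card T)" by (intro sum_nonneg) auto
    show "(\<Sum>T\<in>V q. (exp \<theta> / real q) ^ card T) \<le> 2"
      using inner_sum_le[OF qpos[OF \<open>q \<in> S\<close>], of \<theta>] unfolding V_def m_def I_def by simp
  qed
  have B3: "(\<Prod>q\<in>S. 2::real) \<le> 2 ^ n"
  proof -
    have "card S \<le> n" using card_mono[OF _ SI] unfolding I_def by simp
    then show ?thesis by (simp add: power_increasing)
  qed
  have "real n ^ n * exp (- \<theta> * (\<epsilon> / 2) * real n) * (\<Prod>q\<in>S. \<Sum>T\<in>V q. (exp \<theta> / real q) ^ card T)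
     \<le> real n ^ n * exp (- \<theta> * (\<epsilon> / 2) * real n) * 2 ^ n"
    by (rule mult_left_mono) (use order_trans[OF B2 B3] in simp_all)
  with B1 have "real (card Bad) \<le> real n ^ n * exp (- \<theta> * (\<epsilon> / 2) * real n) * 2 ^ n" by linarith
  then show ?thesis unfolding Bad_def \<Omega>_def I_def S_def by (simp only: mult.assoc)
qed


lemma prob_bound:
  fixes \<epsilon> \<theta> :: real and n k :: nat
  assumes n: "n \<ge> 1" and k: "k \<ge> 1" and eps: "\<epsilon> > 0" and th: "\<theta> \<ge> 0"
    and kbig: "real k \<ge> 2 * exp (2 + 2 * \<theta>) / \<epsilon>"
  shows "measure_pmf.prob (sample_space n)
           {X. (\<Sum>q\<in>Sprimes k n. real (Ycount n q X) ^ 2) > real n ^ 2 * \<epsilon>}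
         \<le> exp (- \<theta> * (\<epsilon> / 2) * real n) * 2 ^ n"
proof -
  define \<Omega> where "\<Omega> = PiE {1..n} (\<lambda>_::nat. {1..n::nat})"
  have fin: "finite \<Omega>" unfolding \<Omega>_def by (intro finite_PiE) auto
  have cardO: "card \<Omega> = n ^ n" unfolding \<Omega>_def by (simp add: card_PiE)
  have ne: "\<Omega> \<noteq> {}" using cardO n by auto
  have eq: "\<Omega> \<inter> {X. (\<Sum>q\<in>Sprimes k n. real (Ycount n q X) ^ 2) > real n ^ 2 * \<epsilon>}
     = {X\<in>\<Omega>. (\<Sum>q\<in>Sprimes k n. real (Ycount n q X) ^ 2) > real n ^ 2 * \<epsilon>}" by auto
  have "measure_pmf.prob (sample_space n)
           {X. (\<Sum>q\<in>Sprimes k n. real (Ycount n q X) ^ 2) > real n ^ 2 * \<epsilon>}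
      = real (card {X\<in>\<Omega>. (\<Sum>q\<in>Sprimes k n. real (Ycount n q X) ^ 2) > real n ^ 2 * \<epsilon>}) / real n ^ n"
    unfolding sample_space_def \<Omega>_def[symmetric]
    using measure_pmf_of_set[OF ne fin] eq cardO by simp
  also have "\<dots> \<le> real n ^ n * (exp (- \<theta> * (\<epsilon> / 2) * real n) * 2 ^ n) / real n ^ n"
    using main_bound[OF n k eps th kbig] unfolding \<Omega>_def by (intro divide_right_mono) auto
  also have "\<dots> = exp (- \<theta> * (\<epsilon> / 2) * real n) * 2 ^ n" using n by simp
  finally show ?thesis .
qed

theorem theorem3p8:
  fixes \<epsilon> :: real
  assumes "\<epsilon> > 0"
  shows "limsup (\<lambda>k::nat. limsup (\<lambda>n::nat.
           ereal (1 / real n) *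
           eln (measure_pmf.prob (sample_space n)
                 {X. (\<Sum>q\<in>Sprimes k n. real (Ycount n q X) ^ 2) > real n ^ 2 * \<epsilon>})))
         = - \<infinity>"
proof -
  define f where "f k n = ereal (1 / real n) *
           eln (measure_pmf.prob (sample_space n)
                 {X. (\<Sum>q\<in>Sprimes k n. real (Ycount n q X) ^ 2) > real n ^ 2 * \<epsilon>})" for k n :: nat
  have main: "limsup (\<lambda>k. limsup (f k)) \<le> ereal (- M)" if M: "M \<ge> 0" for M :: real
  proof -
    define \<theta> where "\<theta> = (M + ln 2) / (\<epsilon> / 2)"
    have th: "\<theta> \<ge> 0" unfolding \<theta>_def using M assms by simp
    define K where "K = nat \<lceil>2 * exp (2 + 2 * \<theta>) / \<epsilon>\<rceil> + 1"
    have fk: "f k n \<le> ereal (- M)" if k: "k \<ge> K" and n: "n \<ge> 1" for k n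
    proof -
      have k1: "k \<ge> 1" using k unfolding K_def by simp
      have kbig: "real k \<ge> 2 * exp (2 + 2 * \<theta>) / \<epsilon>"
      proof -
        have a: "2 * exp (2 + 2 * \<theta>) / \<epsilon> \<le> real (nat \<lceil>2 * exp (2 + 2 * \<theta>) / \<epsilon>\<rceil>)"
          by (rule real_nat_ceiling_ge)
        have "nat \<lceil>2 * exp (2 + 2 * \<theta>) / \<epsilon>\<rceil> \<le> k" using k unfolding K_def by (metis Suc_eq_plus1 Suc_leD)
        then have "real (nat \<lceil>2 * exp (2 + 2 * \<theta>) / \<epsilon>\<rceil>) \<le> real k" by (rule of_nat_mono)
        with a show ?thesis by linarith
      qed
      define p where "p = measure_pmf.prob (sample_space n)
                 {X. (\<Sum>q\<in>Sprimes k n. real (Ycount n q X) ^ 2) > real n ^ 2 * \<epsilon>}"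
      have "p \<le> exp (- \<theta> * (\<epsilon> / 2) * real n) * 2 ^ n"
        unfolding p_def by (rule prob_bound[OF n k1 assms th kbig])
      also have "exp (- \<theta> * (\<epsilon> / 2) * real n) * 2 ^ n = exp (- M * real n)"
      proof -
        have "(2::real) ^ n = exp (real n * ln 2)" by (simp add: exp_of_nat_mult)
        moreover have "- \<theta> * (\<epsilon> / 2) * real n = - (M + ln 2) * real n"
          unfolding \<theta>_def using assms by simp
        ultimately show ?thesis by (simp add: exp_add[symmetric] algebra_simps)
      qed
      finally have pb: "p \<le> exp (- M * real n)" .
      have npos: "real n > 0" using n by simp
      show ?thesis
      proof (cases "p \<le> 0")
        case True
        then show ?thesis unfolding f_def p_def[symmetric] eln_def using npos by simp
      next
        case False
        then have "ln p \<le> ln (exp (- M * real n))" using pb by (subst ln_le_cancel_iff) simp_all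
        then have "ln p \<le> - M * real n" by simp
        then have "ln p / real n \<le> - M" using npos by (simp add: divide_le_eq)
        then show ?thesis unfolding f_def p_def[symmetric] eln_def using False by simp
      qed
    qed
    have "limsup (f k) \<le> ereal (- M)" if "k \<ge> K" for k
      by (rule Limsup_bounded) (use fk that in \<open>auto simp: eventually_sequentially\<close>)
    then show ?thesis
      by (intro Limsup_bounded) (auto simp: eventually_sequentially)
  qed
  have "limsup (\<lambda>k. limsup (f k)) = - \<infinity>"
  proof (rule ereal_bot)
    fix B :: real
    have "limsup (\<lambda>k. limsup (f k)) \<le> ereal (- max 0 (- B))" by (rule main) simp
    also have "\<dots> \<le> ereal B" by simp
    finally show "limsup (\<lambda>k. limsup (f k)) \<le> ereal B" .
  qed
  then show ?thesis unfolding f_def .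
qed

end
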